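(* Let $n\ge1$, identify $\mathbb{R}^{n+1}=\mathbb{R}^n\times\mathbb{R}$, and let $K\subset\mathbb{R}^{n+1}$ be a convex compact set containing a point $(x_*,y_* )$ with $y_*\le0$. Then the following are equivalent: (a) for every positive-valued continuous function $f\colon\mathbb{R}^n\to\mathbb{R}$ whose epigraph $L$ satisfies $K\cap L=\emptyset$, the upper and lower equidistant functions associated with $K$ and $L$ satisfy $G^-(x)=G^+(x)$ for all $x\in\mathbb{R}^n$; (b) the same holds for every positive-valued convex function $f\colon\mathbb{R}^n\to\mathbb{R}$ whose epigraph is disjoint from $K$; (c) there exist no point $x_0\in\mathbb{R}^n$ and real numbers $0<y_1<y_2$ such that $(x_0,y_1)\notin K$ and $(x_0,y_2)\in K$.
   Context: $d(p,A)=\inf\{|p-q|\mid q\in A\}$ (Euclidean distance); $L=\{(x,y)\mid f(x)\le y\}$. The upper and lower equidistant functions are $G^+(x)=\sup\{y\mid d((x,y),K)=d((x,y),L)\}$ and $G^-(x)=\inf\{y\mid d((x,y),K)=d((x,y),L)\}$ (real numbers under these assumptions). *)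

theory Defs
  imports "HOL-Analysis.Analysis"
begin

text \<open>Points of R^(n+1) = R^n x R are pairs; the norm on the product type is the
Euclidean one, so dist and infdist are Euclidean distances.\<close>

definition epi_graph :: "('a \<Rightarrow> real) \<Rightarrow> ('a \<times> real) set" where
  "epi_graph f = {(x, y). f x \<le> y}"

definition equidist_upper :: "('a::euclidean_space \<times> real) set \<Rightarrow> ('a \<times> real) set \<Rightarrow> 'a \<Rightarrow> real" where
  "equidist_upper K L x = Sup {y. infdist (x, y) K = infdist (x, y) L}"

definition equidist_lower :: "('a::euclidean_space \<times> real) set \<Rightarrow> ('a \<times> real) set \<Rightarrow> 'a \<Rightarrow> real" where
  "equidist_lower K L x = Inf {y. infdist (x, y) K = infdist (x, y) L}"

end

theory Submission
  imports Defs
begin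

lemma dist_pair_sq:
  fixes a c :: "'a::euclidean_space" and b d :: real
  shows "(dist (a, b) (c, d))\<^sup>2 = (dist a c)\<^sup>2 + (b - d)\<^sup>2"
  by (simp add: dist_Pair_Pair dist_real_def)

lemma epi_closed:
  fixes f :: "'a::euclidean_space \<Rightarrow> real"
  assumes "continuous_on UNIV f"
  shows "closed (epi_graph f)"
proof -
  have "epi_graph f = {p. f (fst p) \<le> snd p}" by (auto simp: epi_graph_def)
  moreover have "closed {p::'a\<times>real. f (fst p) \<le> snd p}"
    by (rule closed_Collect_le) (auto intro!: continuous_intros continuous_on_compose2[OF assms])
  ultimately show ?thesis by simp
qed

lemma epi_mem: "(x, y) \<in> epi_graph f \<longleftrightarrow> f x \<le> y"
  by (simp add: epi_graph_def)

lemma epi_ne: "epi_graph f \<noteq> {}"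
  using epi_mem[of _ "f _" f] by blast

lemma lt_of_sq_lt:
  fixes a b :: real
  assumes "a\<^sup>2 < b\<^sup>2" "0 \<le> b"
  shows "a < b"
proof (rule ccontr)
  assume "\<not> a < b"
  hence "b\<^sup>2 \<le> a\<^sup>2" using assms(2) by (intro power_mono) auto
  thus False using assms(1) by simp
qed

lemma lemmaA:
  fixes f :: "'a::euclidean_space \<Rightarrow> real"
  assumes cont: "continuous_on UNIV f" and notin: "(x, y) \<notin> epi_graph f" and t: "t > 0"
  shows "infdist (x, y + t) (epi_graph f) < infdist (x, y) (epi_graph f)"
proof -
  let ?L = "epi_graph f"
  obtain q where q: "q \<in> ?L" "infdist (x, y) ?L = dist (x, y) q"
    using infdist_attains_inf[OF epi_closed[OF cont] epi_ne] by metis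
  obtain z w where qzw: "q = (z, w)" by (cases q)
  have fzw: "f z \<le> w" using q qzw by (simp add: epi_mem)
  have fxy: "f x > y" using notin by (simp add: epi_mem)
  define r where "r = dist (x, y) (z, w)"
  have r2: "r\<^sup>2 = (dist x z)\<^sup>2 + (y - w)\<^sup>2" unfolding r_def by (rule dist_pair_sq)
  have r0: "0 \<le> r" unfolding r_def by simp
  have "\<exists>l\<in>?L. dist (x, y + t) l < r"
  proof (cases "w > y")
    case True
    define tau where "tau = max 0 (t - (w - y))"
    have inL: "(z, w + tau) \<in> ?L" using fzw by (simp add: epi_mem tau_def)
    have "\<bar>y + t - (w + tau)\<bar> < w - y" using True t by (simp add: tau_def max_def abs_if)
    hence "\<bar>y + t - (w + tau)\<bar>\<^sup>2 < (w - y)\<^sup>2"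
      by (intro power_strict_mono) auto
    hence "(y + t - (w + tau))\<^sup>2 < (y - w)\<^sup>2"
      by (simp add: power2_commute)
    hence "(dist (x, y + t) (z, w + tau))\<^sup>2 < r\<^sup>2" using r2 dist_pair_sq[of x "y+t" z "w+tau"] by simp
    hence "dist (x, y + t) (z, w + tau) < r" using r0 lt_of_sq_lt by blast
    thus ?thesis using inL by blast
  next
    case False
    have xz: "x \<noteq> z" using fzw fxy False by auto
    have dpos: "dist x z > 0" using xz by simp
    have "isCont f z" using cont by (simp add: continuous_on_eq_continuous_at)
    hence "\<forall>e>0. \<exists>d>0. \<forall>z'. dist z' z < d \<longrightarrow> dist (f z') (f z) < e"
      unfolding continuous_at_eps_delta .
    then obtain \<delta> where d: "\<delta> > 0" "\<And>z'. dist z' z < \<delta> \<Longrightarrow> dist (f z') (f z) < t"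
      using t by blast
    define lam where "lam = min (1/2) (\<delta> / (2 * dist x z))"
    have lam1: "0 < lam" using d dpos by (simp add: lam_def)
    have lam2: "lam \<le> 1/2" by (simp add: lam_def)
    have "lam \<le> \<delta> / (2 * dist x z)" by (simp add: lam_def)
    hence "lam * dist x z \<le> \<delta> / (2 * dist x z) * dist x z"
      using dpos by (intro mult_right_mono) auto
    also have "\<dots> = \<delta> / 2" using dpos by simp
    finally have lam3: "lam * dist x z < \<delta>" using d by simp
    note lam = lam1 lam2 lam3
    define z' where "z' = z + lam *\<^sub>R (x - z)"
    have "dist z' z = lam * dist x z"
      using lam by (simp add: z'_def dist_norm dist_commute)
    hence "dist (f z') (f z) < t" using d lam by simp
    hence fz': "f z' \<le> y + t" using fzw False by (simp add: dist_real_def abs_if split: if_splits)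
    have inL: "(z', y + t) \<in> ?L" using fz' by (simp add: epi_mem)
    have "x - z' = (1 - lam) *\<^sub>R (x - z)" by (simp add: z'_def algebra_simps)
    hence dxz': "dist x z' = (1 - lam) * dist x z" using lam by (simp add: dist_norm)
    have "dist (x, y + t) (z', y + t) = dist x z'" by (simp add: dist_Pair_Pair)
    also have "\<dots> < dist x z"
    proof -
      have p: "0 < lam * dist x z" using lam1 dpos by (rule mult_pos_pos)
      have "dist x z' = dist x z - lam * dist x z" using dxz' by (simp add: algebra_simps)
      thus ?thesis using p by linarith
    qed
    also have "\<dots> \<le> r"
    proof -
      have "(dist x z)\<^sup>2 \<le> r\<^sup>2" using r2 by simp
      thus ?thesis using r0 by (rule power2_le_imp_le)
    qed
    finally show ?thesis using inL by blast
  qed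
  then obtain l where "l \<in> ?L" "dist (x, y + t) l < r" by blast
  hence "infdist (x, y + t) ?L < r" using infdist_le by (meson le_less_trans)
  thus ?thesis using q qzw r_def by simp
qed

lemma down_closed:
  fixes K :: "('a::euclidean_space \<times> real) set"
  assumes cl: "closed K" and hc: "\<forall>x0 y1 y2. 0 < y1 \<and> y1 < y2 \<and> (x0, y2) \<in> K \<longrightarrow> (x0, y1) \<in> K"
    and k: "(u, v) \<in> K" and s: "0 \<le> s" "s \<le> v"
  shows "(u, s) \<in> K"
proof (cases "s = v")
  case True thus ?thesis using k by simp
next
  case False
  hence sv: "s < v" using s by simp
  show ?thesis
  proof (cases "s > 0")
    case True thus ?thesis using hc k sv by blast
  next
    case False
    hence s0: "s = 0" using s by simp
    show ?thesis
    proof (rule ccontr)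
      assume nk: "(u, s) \<notin> K"
      have "open (- K)" using cl by (simp add: open_Compl)
      then obtain e where e: "e > 0" "ball (u, s) e \<subseteq> - K"
        using nk open_contains_ball by blast
      define s' where "s' = min (e/2) v"
      have s'0: "s' > 0" using e sv s0 by (simp add: s'_def)
      have s'v: "s' \<le> v" by (simp add: s'_def)
      have inK: "(u, s') \<in> K"
      proof (cases "s' = v")
        case True thus ?thesis using k by simp
      next
        case False thus ?thesis using hc k s'0 s'v by force
      qed
      have "dist (u, s) (u, s') = s'" using s0 s'0 by (simp add: dist_Pair_Pair dist_real_def)
      also have "\<dots> < e" using e by (simp add: s'_def)
      finally have "(u, s') \<in> ball (u, s) e" by simp
      thus False using e inK by blast
    qed
  qed
qed

lemma sq_dist_le:
  fixes x u :: "'a::euclidean_space" and a b :: real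
  assumes "dist x u \<le> a"
  shows "(dist x u)\<^sup>2 \<le> a\<^sup>2"
  using assms by (intro power_mono) auto

lemma main_c:
  fixes K :: "('a::euclidean_space \<times> real) set" and f :: "'a \<Rightarrow> real"
  assumes cl: "closed K" and ne: "K \<noteq> {}"
    and hc: "\<forall>x0 y1 y2. 0 < y1 \<and> y1 < y2 \<and> (x0, y2) \<in> K \<longrightarrow> (x0, y1) \<in> K"
    and cont: "continuous_on UNIV f" and pos: "\<forall>x. 0 < f x" and disj: "K \<inter> epi_graph f = {}"
    and zero: "infdist (x, y) K = infdist (x, y) (epi_graph f)" and t: "t > 0"
  shows "infdist (x, y + t) (epi_graph f) < infdist (x, y + t) K"
proof -
  let ?L = "epi_graph f"
  have clL: "closed ?L" using epi_closed[OF cont] .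
  have notL: "(x, y) \<notin> ?L"
  proof
    assume a: "(x, y) \<in> ?L"
    hence "infdist (x, y) K = 0" using zero by simp
    hence "(x, y) \<in> K" using in_closed_iff_infdist_zero[OF cl ne] by simp
    thus False using a disj by blast
  qed
  obtain q where q: "q \<in> ?L" "infdist (x, y) ?L = dist (x, y) q"
    using infdist_attains_inf[OF clL epi_ne] by metis
  obtain z w where qzw: "q = (z, w)" by (cases q)
  have fzw: "f z \<le> w" using q qzw by (simp add: epi_mem)
  have w0: "w > 0" using pos fzw by (metis less_le_trans)
  define r where "r = infdist (x, y) ?L"
  have r0: "0 \<le> r" by (simp add: r_def infdist_nonneg)
  have r2: "r\<^sup>2 = (dist x z)\<^sup>2 + (y - w)\<^sup>2" using q qzw r_def dist_pair_sq by simp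
  have hK: "r\<^sup>2 \<le> (dist x u)\<^sup>2 + (y - v)\<^sup>2" if uv: "(u, v) \<in> K" for u v
  proof -
    have "r \<le> dist (x, y) (u, v)" using infdist_le[OF uv, of "(x, y)"] zero r_def by simp
    hence "r\<^sup>2 \<le> (dist (x,y) (u,v))\<^sup>2" using r0 by (intro power_mono) auto
    thus ?thesis using dist_pair_sq[of x y u v] by simp
  qed
  define d where "d = infdist (x, y + t) ?L"
  have d0: "0 \<le> d" by (simp add: d_def infdist_nonneg)
  have dr: "d < r" using lemmaA[OF cont notL t] d_def r_def by simp
  have dq: "d\<^sup>2 \<le> (dist x z)\<^sup>2 + (y + t - w)\<^sup>2"
  proof -
    have "d \<le> dist (x, y + t) (z, w)" using infdist_le q qzw d_def by metis
    hence "d\<^sup>2 \<le> (dist (x, y + t) (z, w))\<^sup>2" using d0 by (intro power_mono) auto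
    thus ?thesis using dist_pair_sq[of x "y+t" z w] by simp
  qed
  have dq2: "d\<^sup>2 \<le> (dist x z)\<^sup>2 + (y + t - max w (y + t))\<^sup>2"
  proof -
    have inL: "(z, max w (y + t)) \<in> ?L" using fzw by (simp add: epi_mem)
    have "d \<le> dist (x, y + t) (z, max w (y + t))" using infdist_le[OF inL] d_def by simp
    hence "d\<^sup>2 \<le> (dist (x, y + t) (z, max w (y + t)))\<^sup>2" using d0 by (intro power_mono) auto
    thus ?thesis using dist_pair_sq[of x "y+t" z "max w (y + t)"] by simp
  qed
  have key: "d < dist (x, y + t) (u, v)"
    if uv: "(u, v) \<in> K" and cv: "v \<le> 0 \<or> (0 < v \<and> v \<le> y + t)" for u v
  proof -
    define a where "a = (dist x u)\<^sup>2"
    have a0: "0 \<le> a" by (simp add: a_def)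
    have D: "(dist (x, y + t) (u, v))\<^sup>2 = a + (y + t - v)\<^sup>2" using dist_pair_sq a_def by simp
    have "d\<^sup>2 < a + (y + t - v)\<^sup>2"
    proof (cases "v \<le> 0")
      case True
      have h1: "r\<^sup>2 \<le> a + (y - v)\<^sup>2" using hK[OF uv] a_def by simp
      have e1: "(y + t - w)\<^sup>2 = (y - w)\<^sup>2 + 2*t*(y - w) + t\<^sup>2" by (simp add: power2_eq_square algebra_simps)
      have e2: "(y + t - v)\<^sup>2 = (y - v)\<^sup>2 + 2*t*(y - v) + t\<^sup>2" by (simp add: power2_eq_square algebra_simps)
      have "t * (y - w) < t * (y - v)" using t True w0 by (intro mult_strict_left_mono) auto
      then show ?thesis using dq r2 h1 e1 e2 by linarith
    next
      case False
      hence v: "0 < v" "v \<le> y + t" using cv by auto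
      show ?thesis
      proof (cases "y \<ge> 0")
        case True
        define s where "s = min y v"
        have "(u, s) \<in> K" using down_closed[OF cl hc uv] True v by (simp add: s_def)
        hence h1: "r\<^sup>2 \<le> a + (y - s)\<^sup>2" using hK a_def by simp
        have "0 \<le> y - s" "y - s \<le> y + t - v" using True v t by (auto simp: s_def)
        hence "(y - s)\<^sup>2 \<le> (y + t - v)\<^sup>2" by (intro power_mono) auto
        moreover have "d\<^sup>2 < r\<^sup>2" using dr d0 by (intro power_strict_mono) auto
        ultimately show ?thesis using h1 by linarith
      next
        case False
        have "(u, 0) \<in> K" using down_closed[OF cl hc uv] v by simp
        hence h1: "r\<^sup>2 \<le> a + y\<^sup>2" using hK[of u 0] a_def by simp
        have "(-y)\<^sup>2 < (w - y)\<^sup>2" using False w0 by (intro power_strict_mono) auto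
        hence wy: "y\<^sup>2 < (y - w)\<^sup>2" by (simp add: power2_commute)
        have sq0: "0 \<le> (y + t - v)\<^sup>2" by simp
        show ?thesis
        proof (cases "w \<le> y + t")
          case True
          have "d\<^sup>2 \<le> (dist x z)\<^sup>2" using dq2 True by simp
          then show ?thesis using r2 h1 wy sq0 by linarith
        next
          case False
          have e3: "(y + t - w)\<^sup>2 = (y - w)\<^sup>2 + (y + t)\<^sup>2 - y\<^sup>2 - 2*t*w"
            by (simp add: power2_eq_square algebra_simps)
          have m1: "y + t < w" using False by simp
          have m2: "y + t < t" using \<open>\<not> 0 \<le> y\<close> by simp
          have m3: "0 \<le> y + t" using v by simp
          have "(y + t) * (y + t) < w * t" using mult_strict_mono[OF m1 m2 w0 m3] .
          moreover have "0 < w * t" using w0 t by simp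
          moreover have "2 * t * w = w * t + w * t" by simp
          ultimately have "(y + t)\<^sup>2 < 2 * t * w" unfolding power2_eq_square by linarith
          then show ?thesis using dq r2 h1 e3 sq0 by linarith
        qed
      qed
    qed
    hence "d\<^sup>2 < (dist (x, y + t) (u, v))\<^sup>2" using D by simp
    thus ?thesis using lt_of_sq_lt zero_le_dist by blast
  qed
  obtain k where k: "k \<in> K" "infdist (x, y + t) K = dist (x, y + t) k"
    using infdist_attains_inf[OF cl ne] by metis
  obtain u v where kuv: "k = (u, v)" by (cases k)
  show ?thesis
  proof (cases "v \<le> 0 \<or> (0 < v \<and> v \<le> y + t)")
    case True thus ?thesis using key k kuv d_def by simp
  next
    case False
    hence v: "v > 0" "v > y + t" by auto
    define s where "s = max (y + t) 0"
    have sK: "(u, s) \<in> K" using down_closed[OF cl hc, of u v s] k kuv v by (simp add: s_def)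
    have "s \<le> 0 \<or> (0 < s \<and> s \<le> y + t)" by (auto simp: s_def)
    hence "d < dist (x, y + t) (u, s)" using key[OF sK] by simp
    also have "dist (x, y + t) (u, s) \<le> dist (x, y + t) (u, v)"
    proof -
      have "0 \<le> s - (y + t)" "s - (y + t) \<le> v - (y + t)" using v by (auto simp: s_def)
      hence "(s - (y + t))\<^sup>2 \<le> (v - (y + t))\<^sup>2" by (intro power_mono) auto
      hence "(dist y' s)\<^sup>2 \<le> (dist y' v)\<^sup>2" if "y' = y + t" for y'
        using that by (simp add: dist_real_def power2_commute)
      thus ?thesis unfolding dist_Pair_Pair by (intro real_sqrt_le_mono add_left_mono) auto
    qed
    finally show ?thesis using k kuv d_def by simp
  qed
qed

lemma low_bound:
  fixes K L :: "('a::euclidean_space \<times> real) set"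
  assumes m: "m > 0" and ys: "ys \<le> 0" and K: "(xs, ys) \<in> K"
    and clL: "closed L" and neL: "L \<noteq> {}"
    and hL: "\<And>z w. (z, w) \<in> L \<Longrightarrow> 0 < w \<and> (dist x z < dist x xs \<longrightarrow> m \<le> w)"
    and y: "y \<le> ys - (dist x xs)\<^sup>2 / m - 1"
  shows "infdist (x, y) K < infdist (x, y) L"
proof -
  define \<rho> where "\<rho> = dist x xs"
  have \<rho>0: "0 \<le> \<rho>" by (simp add: \<rho>_def)
  obtain l where l: "l \<in> L" "infdist (x, y) L = dist (x, y) l"
    using infdist_attains_inf[OF clL neL] by metis
  obtain z w where lzw: "l = (z, w)" by (cases l)
  have hw1: "0 < w" using hL l lzw by blast
  have hw2: "m \<le> w" if "dist x z < \<rho>" using hL l lzw that \<rho>_def by blast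
  have D0: "0 \<le> \<rho>\<^sup>2 / m" using m by simp
  have yys: "y < ys" using y D0 unfolding \<rho>_def by linarith
  have main: "\<rho>\<^sup>2 + (y - ys)\<^sup>2 < (dist x z)\<^sup>2 + (y - w)\<^sup>2"
  proof (cases "dist x z < \<rho>")
    case False
    hence "\<rho> \<le> dist x z" by simp
    hence a: "\<rho>\<^sup>2 \<le> (dist x z)\<^sup>2" using \<rho>0 by (intro power_mono) auto
    have "ys - y < w - y" using hw1 ys by simp
    hence "(ys - y)\<^sup>2 < (w - y)\<^sup>2" using yys by (intro power_strict_mono) auto
    hence "(y - ys)\<^sup>2 < (y - w)\<^sup>2" by (simp add: power2_commute)
    thus ?thesis using a by linarith
  next
    case True
    hence mw: "m \<le> w" using hw2 by simp
    have "m - y \<le> w - y" using mw by simp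
    hence b: "(m - y)\<^sup>2 \<le> (w - y)\<^sup>2" using m yys ys by (intro power_mono) auto
    have p1: "2 * (\<rho>\<^sup>2 / m) + 2 \<le> m + ys - 2 * y" using y ys m unfolding \<rho>_def by linarith
    have p2: "m * (2 * (\<rho>\<^sup>2 / m) + 2) \<le> (m - ys) * (m + ys - 2 * y)"
      using p1 ys m D0 by (intro mult_mono) auto
    have p3: "m * (2 * (\<rho>\<^sup>2 / m) + 2) = 2 * \<rho>\<^sup>2 + 2 * m" using m by (simp add: algebra_simps)
    have e: "(m - y)\<^sup>2 - (y - ys)\<^sup>2 = (m - ys) * (m + ys - 2 * y)"
      by (simp add: power2_eq_square algebra_simps)
    have n1: "0 \<le> (dist x z)\<^sup>2" by simp
    have n2: "0 \<le> \<rho>\<^sup>2" by simp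
    have c: "(y - w)\<^sup>2 = (w - y)\<^sup>2" by (rule power2_commute)
    show ?thesis using b p2 p3 e m n1 n2 c by linarith
  qed
  hence "(dist (x, y) (xs, ys))\<^sup>2 < (dist (x, y) l)\<^sup>2"
    using dist_pair_sq[of x y xs ys] dist_pair_sq[of x y z w] lzw \<rho>_def by simp
  hence "dist (x, y) (xs, ys) < dist (x, y) l" using lt_of_sq_lt zero_le_dist by blast
  moreover have "infdist (x, y) K \<le> dist (x, y) (xs, ys)" using infdist_le[OF K] .
  ultimately show ?thesis using l by simp
qed

lemma phi_cont:
  fixes K L :: "('a::euclidean_space \<times> real) set"
  shows "continuous_on A (\<lambda>y. infdist (x, y) K - infdist (x, y) L)"
  by (intro continuous_intros)

lemma exists_zero:
  fixes K :: "('a::euclidean_space \<times> real) set" and f :: "'a \<Rightarrow> real"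
  assumes cl: "closed K" and K: "(xs, ys) \<in> K" and ys: "ys \<le> 0"
    and cont: "continuous_on UNIV f" and pos: "\<forall>x. 0 < f x" and disj: "K \<inter> epi_graph f = {}"
  shows "\<exists>y. infdist (x, y) K = infdist (x, y) (epi_graph f)"
proof -
  let ?L = "epi_graph f"
  have ne: "K \<noteq> {}" using K by blast
  obtain z0 where z0: "z0 \<in> cball x (dist x xs)" "\<forall>z\<in>cball x (dist x xs). f z0 \<le> f z"
    using continuous_attains_inf[OF compact_cball _ continuous_on_subset[OF cont], of x "dist x xs"]
    by (metis centre_in_cball empty_iff subset_UNIV zero_le_dist)
  define m where "m = f z0"
  have m: "m > 0" using pos by (simp add: m_def)
  have hL: "0 < w \<and> (dist x z < dist x xs \<longrightarrow> m \<le> w)" if "(z, w) \<in> ?L" for z w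
  proof -
    have fw: "f z \<le> w" using that by (simp add: epi_mem)
    have "0 < w" using pos fw by (metis less_le_trans)
    moreover have "m \<le> w" if "dist x z < dist x xs"
    proof -
      have "z \<in> cball x (dist x xs)" using that by simp
      thus ?thesis using z0 fw m_def by force
    qed
    ultimately show ?thesis by blast
  qed
  define yl where "yl = ys - (dist x xs)\<^sup>2 / m - 1"
  have low: "infdist (x, yl) K < infdist (x, yl) ?L"
    using low_bound[OF m ys K epi_closed[OF cont] epi_ne hL] yl_def by simp
  have inL: "(x, f x) \<in> ?L" by (simp add: epi_mem)
  hence "(x, f x) \<notin> K" using disj by blast
  hence high: "infdist (x, f x) K > 0" using infdist_pos_not_in_closed[OF cl ne] by simp
  have "0 \<le> (dist x xs)\<^sup>2 / m" using m by simp
  hence "yl \<le> f x" using pos ys yl_def by (smt (verit))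
  then obtain y where "yl \<le> y" "y \<le> f x"
    "infdist (x, y) K - infdist (x, y) ?L = 0"
    using IVT'[of "\<lambda>y. infdist (x, y) K - infdist (x, y) ?L" yl 0 "f x", OF _ _ _ phi_cont]
      low high inL by auto
  thus ?thesis by auto
qed

lemma c_to_a:
  fixes K :: "('a::euclidean_space \<times> real) set" and f :: "'a \<Rightarrow> real"
  assumes cp: "compact K" and K: "(xs, ys) \<in> K" and ys: "ys \<le> 0"
    and hc0: "\<not> (\<exists>x0 y1 y2. 0 < y1 \<and> y1 < y2 \<and> (x0, y1) \<notin> K \<and> (x0, y2) \<in> K)"
    and cont: "continuous_on UNIV f" and pos: "\<forall>x. 0 < f x" and disj: "K \<inter> epi_graph f = {}"
  shows "equidist_lower K (epi_graph f) x = equidist_upper K (epi_graph f) x"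
proof -
  let ?L = "epi_graph f"
  have cl: "closed K" using cp by (rule compact_imp_closed)
  have ne: "K \<noteq> {}" using K by blast
  have hc: "\<forall>x0 y1 y2. 0 < y1 \<and> y1 < y2 \<and> (x0, y2) \<in> K \<longrightarrow> (x0, y1) \<in> K" using hc0 by blast
  obtain y0 where y0: "infdist (x, y0) K = infdist (x, y0) ?L"
    using exists_zero[OF cl K ys cont pos disj] by blast
  have S: "{y. infdist (x, y) K = infdist (x, y) ?L} = {y0}"
  proof (intro equalityI subsetI)
    fix y assume "y \<in> {y. infdist (x, y) K = infdist (x, y) ?L}"
    hence yy: "infdist (x, y) K = infdist (x, y) ?L" by simp
    have "\<not> y0 < y"
    proof
      assume lt: "y0 < y"
      have "infdist (x, y0 + (y - y0)) ?L < infdist (x, y0 + (y - y0)) K"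
        using main_c[OF cl ne hc cont pos disj y0, of "y - y0"] lt by simp
      thus False using yy by simp
    qed
    moreover have "\<not> y < y0"
    proof
      assume lt: "y < y0"
      have "infdist (x, y + (y0 - y)) ?L < infdist (x, y + (y0 - y)) K"
        using main_c[OF cl ne hc cont pos disj yy, of "y0 - y"] lt by simp
      thus False using y0 by simp
    qed
    ultimately show "y \<in> {y0}" by simp
  next
    fix y assume "y \<in> {y0}" thus "y \<in> {y. infdist (x, y) K = infdist (x, y) ?L}" using y0 by simp
  qed
  show ?thesis unfolding equidist_lower_def equidist_upper_def S by simp
qed

lemma conv_aff_max:
  fixes e :: "'a::euclidean_space"
  shows "convex_on UNIV (\<lambda>z. max ((c - inner e z) / \<theta>) \<epsilon>)"
  unfolding convex_on_def
proof (intro conjI ballI allI impI)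
  show "convex (UNIV :: 'a set)" by simp
  fix x y :: 'a and u v :: real
  assume u: "0 \<le> u" and v: "0 \<le> v" and uv: "u + v = 1"
  define A where "A = (c - inner e x) / \<theta>"
  define B where "B = (c - inner e y) / \<theta>"
  have "c - inner e (u *\<^sub>R x + v *\<^sub>R y) = u * (c - inner e x) + v * (c - inner e y)"
  proof -
    have "c = u * c + v * c" using uv by (metis distrib_right mult_1)
    thus ?thesis by (simp add: inner_add_right algebra_simps)
  qed
  hence aff: "(c - inner e (u *\<^sub>R x + v *\<^sub>R y)) / \<theta> = u * A + v * B"
    by (simp add: A_def B_def add_divide_distrib)
  have h1: "u * A \<le> u * max A \<epsilon>" using u by (intro mult_left_mono) auto
  have h2: "v * B \<le> v * max B \<epsilon>" using v by (intro mult_left_mono) auto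
  have h3: "u * \<epsilon> \<le> u * max A \<epsilon>" using u by (intro mult_left_mono) auto
  have h4: "v * \<epsilon> \<le> v * max B \<epsilon>" using v by (intro mult_left_mono) auto
  have h5: "\<epsilon> = u * \<epsilon> + v * \<epsilon>" using uv by (metis distrib_right mult_1)
  show "max ((c - inner e (u *\<^sub>R x + v *\<^sub>R y)) / \<theta>) \<epsilon>
        \<le> u * max ((c - inner e x) / \<theta>) \<epsilon> + v * max ((c - inner e y) / \<theta>) \<epsilon>"
    unfolding aff A_def[symmetric] B_def[symmetric] using h1 h2 h3 h4 h5 by linarith
qed

lemma counter:
  fixes K :: "('a::euclidean_space \<times> real) set"
  assumes cv: "convex K" and cp: "compact K" and K: "(xs, ys) \<in> K" and ys: "ys \<le> 0"
    and y1: "0 < y1" "y1 < y2" and n1: "(x0, y1) \<notin> K" and k2: "(x0, y2) \<in> K"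
  shows "\<exists>f::'a \<Rightarrow> real. (\<forall>x. 0 < f x) \<and> convex_on UNIV f \<and> K \<inter> epi_graph f = {}
           \<and> (\<exists>x. equidist_lower K (epi_graph f) x \<noteq> equidist_upper K (epi_graph f) x)"
proof -
  have cl: "closed K" using cp by (rule compact_imp_closed)
  have ne: "K \<noteq> {}" using K by blast
  define H where "H = {p :: 'a \<times> real. snd p \<le> y1}"
  have cH: "convex H" unfolding H_def
    by (rule convexI) (auto intro!: convex_bound_le)
  have clH: "closed H" unfolding H_def
    by (rule closed_Collect_le) (auto intro!: continuous_intros)
  define A where "A = fst ` (K \<inter> H)"
  have cA: "convex A" unfolding A_def
    by (rule convex_linear_image[OF linear_fst convex_Int[OF cv cH]])
  have kA: "compact A" unfolding A_def
    by (rule compact_continuous_image) (auto intro!: continuous_intros compact_Int_closed cp clH)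
  have x0A: "x0 \<notin> A"
  proof
    assume "x0 \<in> A"
    then obtain y' where y': "(x0, y') \<in> K" "y' \<le> y1" unfolding A_def H_def by force
    have "y' \<noteq> y1" using y' n1 by auto
    hence y'1: "y' < y1" using y' by simp
    define \<mu> where "\<mu> = (y1 - y') / (y2 - y')"
    have mu0: "0 \<le> \<mu>" using y'1 y1 by (simp add: \<mu>_def)
    have mu1: "\<mu> \<le> 1" using y'1 y1 by (simp add: \<mu>_def)
    have "(1 - \<mu>) *\<^sub>R (x0, y') + \<mu> *\<^sub>R (x0, y2) \<in> K"
      using convexD[OF cv y'(1) k2, of "1 - \<mu>" \<mu>] mu0 mu1 by simp
    moreover have "(1 - \<mu>) * y' + \<mu> * y2 = y1"
    proof -
      have "\<mu> * (y2 - y') = y1 - y'" using y'1 y1 by (simp add: \<mu>_def)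
      moreover have "(1 - \<mu>) * y' + \<mu> * y2 = y' + \<mu> * (y2 - y')" by (simp add: algebra_simps)
      ultimately show ?thesis by simp
    qed
    moreover have "(1 - \<mu>) *\<^sub>R x0 + \<mu> *\<^sub>R x0 = x0" by (simp add: scaleR_left_distrib[symmetric])
    ultimately have "(x0, y1) \<in> K" by simp
    thus False using n1 by simp
  qed
  obtain a b where ab: "inner a x0 < b" "\<forall>z\<in>A. inner a z > b"
    using separating_hyperplane_closed_point[OF cA compact_imp_closed[OF kA] x0A] by blast
  have xsA: "xs \<in> A" unfolding A_def H_def using K ys y1 by force
  have a0: "a \<noteq> 0" using ab xsA by auto
  define na where "na = norm a"
  have na: "na > 0" using a0 by (simp add: na_def)
  define e where "e = - (1 / na) *\<^sub>R a"
  define \<beta> where "\<beta> = - b / na"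
  have ne1: "norm e = 1" using na by (simp add: e_def na_def)
  have ie: "inner e z = - inner a z / na" for z by (simp add: e_def)
  have eA: "inner e z < \<beta>" if "z \<in> A" for z
    using ab that na by (simp add: ie \<beta>_def divide_strict_right_mono)
  have ex0: "\<beta> < inner e x0"
    using ab na by (simp add: ie \<beta>_def divide_strict_right_mono)
  have "continuous_on K (\<lambda>k. inner e (fst k))" by (intro continuous_intros)
  then obtain kF where kF: "kF \<in> K" "\<forall>k\<in>K. inner e (fst k) \<le> inner e (fst kF)"
    using continuous_attains_sup[OF cp ne] by blast
  define T where "T = inner e (fst kF)"
  have hT: "inner e (fst k) \<le> T" if "k \<in> K" for k using kF that T_def by simp
  have Tx0: "inner e x0 \<le> T" using hT[OF k2] by simp
  have kFy: "snd kF > y1"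
  proof (rule ccontr)
    assume "\<not> snd kF > y1"
    hence "fst kF \<in> A" using kF unfolding A_def H_def by force
    hence "T < \<beta>" using eA T_def by simp
    thus False using ex0 Tx0 by simp
  qed
  define \<gamma> where "\<gamma> = min (y1/2) ((T - \<beta>)/2)"
  have g0: "\<gamma> > 0" using y1 ex0 Tx0 by (simp add: \<gamma>_def)
  have g1: "\<gamma> \<le> y1/2" unfolding \<gamma>_def by (rule min.cobounded1)
  have "\<gamma> \<le> (T - \<beta>)/2" unfolding \<gamma>_def by (rule min.cobounded2)
  hence g2: "2 * \<gamma> \<le> T - \<beta>" by (simp add: field_simps)
  define \<Delta> where "\<Delta> = T - inner e x0"
  have D0: "0 \<le> \<Delta>" using Tx0 by (simp add: \<Delta>_def)
  define \<eta> where "\<eta> = \<gamma> / (2 * (\<Delta> + \<gamma>))"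
  have eta0: "0 < \<eta>" using g0 D0 by (simp add: \<eta>_def)
  have eta1: "\<eta> \<le> 1/2" using g0 D0 by (simp add: \<eta>_def field_simps)
  have etaD: "\<eta> * \<Delta> \<le> \<gamma> / 2"
  proof -
    have "\<eta> * \<Delta> = \<gamma> * \<Delta> / (2 * (\<Delta> + \<gamma>))" by (simp add: \<eta>_def)
    also have "\<dots> \<le> \<gamma> * (\<Delta> + \<gamma>) / (2 * (\<Delta> + \<gamma>))"
      using g0 D0 by (intro divide_right_mono mult_left_mono) auto
    also have "\<dots> = \<gamma> / 2"
      using g0 D0 by (intro nonzero_mult_divide_mult_cancel_right) linarith
    finally show ?thesis .
  qed
  define P where "P = (1 - \<eta>) *\<^sub>R kF + \<eta> *\<^sub>R (x0, y2)"
  have PK: "P \<in> K" unfolding P_def using convexD[OF cv kF(1) k2, of "1 - \<eta>" \<eta>] eta0 eta1 by simp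
  define x where "x = fst P"
  define yt where "yt = snd P"
  have Pxy: "P = (x, yt)" by (simp add: x_def yt_def)
  have xdef: "x = (1 - \<eta>) *\<^sub>R fst kF + \<eta> *\<^sub>R x0" by (simp add: x_def P_def)
  have ytdef: "yt = (1 - \<eta>) * snd kF + \<eta> * y2" by (simp add: yt_def P_def)
  have yt1: "y1 < yt"
  proof -
    have "(1 - \<eta>) * y1 \<le> (1 - \<eta>) * snd kF" using kFy eta1 by (intro mult_left_mono) auto
    moreover have "\<eta> * y1 < \<eta> * y2" using y1 eta0 by simp
    ultimately show ?thesis using ytdef by (simp add: algebra_simps)
  qed
  have ix: "inner e x = T - \<eta> * \<Delta>"
    by (simp add: xdef inner_add_right T_def \<Delta>_def algebra_simps)
  define p where "p = (x, y1/2)"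
  have dK: "\<gamma> \<le> infdist p K"
  proof -
    obtain k where k: "k \<in> K" "infdist p K = dist p k" using infdist_attains_inf[OF cl ne] by metis
    obtain u v where kuv: "k = (u, v)" by (cases k)
    have "\<gamma> \<le> dist p k"
    proof (cases "v > y1")
      case True
      have "dist (y1/2) v \<le> dist p k" using dist_snd_le[of p k] by (simp add: p_def kuv)
      moreover have "dist (y1/2) v = v - y1/2" using True y1 by (simp add: dist_real_def)
      ultimately show ?thesis using True g1 by linarith
    next
      case False
      hence "u \<in> A" using k kuv unfolding A_def H_def by force
      hence ub: "inner e u < \<beta>" by (rule eA)
      have "inner e (x - u) \<le> norm e * norm (x - u)" by (rule norm_cauchy_schwarz)
      hence "inner e (x - u) \<le> dist x u" using ne1 by (simp add: dist_norm)
      moreover have "dist x u \<le> dist p k" using dist_fst_le[of p k] by (simp add: p_def kuv)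
      moreover have "inner e (x - u) = inner e x - inner e u" by (simp add: inner_diff_right)
      ultimately show ?thesis using ix ub etaD g2 g0 by linarith
    qed
    thus ?thesis using k by simp
  qed
  have "continuous_on K (\<lambda>k. \<bar>snd k - y1/2\<bar>)" by (intro continuous_intros)
  then obtain kR where kR: "kR \<in> K" "\<forall>k\<in>K. \<bar>snd k - y1/2\<bar> \<le> \<bar>snd kR - y1/2\<bar>"
    using continuous_attains_sup[OF cp ne] by blast
  define R0 where "R0 = \<bar>snd kR - y1/2\<bar>"
  have R00: "0 \<le> R0" by (simp add: R0_def)
  have hR: "snd k - y1/2 \<le> R0" if "k \<in> K" for k using kR that R0_def by force
  define \<theta> where "\<theta> = \<gamma> / (8 * (R0 + 1))"
  have th0: "\<theta> > 0" using g0 R00 by (simp add: \<theta>_def)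
  have thR: "\<theta> * R0 \<le> \<gamma> / 8"
  proof -
    have "\<theta> * R0 = \<gamma> * R0 / (8 * (R0 + 1))" by (simp add: \<theta>_def)
    also have "\<dots> \<le> \<gamma> * (R0 + 1) / (8 * (R0 + 1))"
      using g0 R00 by (intro divide_right_mono mult_left_mono) auto
    also have "\<dots> = \<gamma> / 8"
      using R00 by (intro nonzero_mult_divide_mult_cancel_right) linarith
    finally show ?thesis .
  qed
  define s where "s = 3 * \<gamma> / 4"
  define c where "c = inner e x + s + \<theta> * (y1/2)"
  define f where "f = (\<lambda>z::'a. max ((c - inner e z) / \<theta>) (y1/2))"
  let ?L = "epi_graph f"
  have fge: "y1/2 \<le> f z" for z by (simp add: f_def)
  have fpos: "\<forall>z. 0 < f z"
  proof
    fix z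
    have "0 < y1/2" using y1 by simp
    thus "0 < f z" using fge[of z] by linarith
  qed
  have fconv: "convex_on UNIV f" unfolding f_def by (rule conv_aff_max)
  have fcont: "continuous_on UNIV f" by (rule convex_on_continuous[OF open_UNIV fconv])
  have disj: "K \<inter> ?L = {}"
  proof (rule ccontr)
    assume "K \<inter> ?L \<noteq> {}"
    then obtain u v where uv: "(u, v) \<in> K" "(u, v) \<in> ?L" by auto
    have "(c - inner e u) / \<theta> \<le> v" using uv(2) by (simp add: epi_mem f_def)
    hence "c - inner e u \<le> \<theta> * v" using th0 by (simp add: divide_le_eq mult.commute)
    moreover have "inner e u \<le> T" using hT[OF uv(1)] by simp
    moreover have "\<theta> * (v - y1/2) \<le> \<theta> * R0" using hR[OF uv(1)] th0 by (intro mult_left_mono) auto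
    moreover have "\<theta> * (v - y1/2) = \<theta> * v - \<theta> * (y1/2)" by (simp add: algebra_simps)
    ultimately show False using c_def s_def ix etaD thR g0 by linarith
  qed
  have clL: "closed ?L" by (rule epi_closed[OF fcont])
  have dL: "infdist p ?L \<le> s"
  proof -
    have iee: "inner e e = 1" using ne1 by (simp add: power2_norm_eq_inner[symmetric])
    have "inner e (x + s *\<^sub>R e) = inner e x + s" by (simp add: inner_add_right iee)
    hence "(c - inner e (x + s *\<^sub>R e)) / \<theta> = y1/2" using th0 by (simp add: c_def)
    hence "(x + s *\<^sub>R e, y1/2) \<in> ?L" by (simp add: epi_mem f_def)
    moreover have "dist p (x + s *\<^sub>R e, y1/2) = s"
      using g0 ne1 by (simp add: p_def dist_Pair_Pair dist_norm s_def)
    ultimately show ?thesis using infdist_le by metis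
  qed
  define \<phi> where "\<phi> = (\<lambda>y. infdist (x, y) K - infdist (x, y) ?L)"
  have phic: "continuous_on B \<phi>" for B unfolding \<phi>_def by (rule phi_cont)
  have ph_mid: "\<phi> (y1/2) > 0" using dK dL g0 by (simp add: \<phi>_def p_def s_def)
  have ph_top: "\<phi> yt < 0"
  proof -
    have "infdist (x, yt) K = 0" using PK Pxy by simp
    moreover have "(x, yt) \<notin> ?L" using PK Pxy disj by blast
    hence "infdist (x, yt) ?L > 0" using infdist_pos_not_in_closed[OF clL epi_ne] by simp
    ultimately show ?thesis by (simp add: \<phi>_def)
  qed
  define yl where "yl = ys - (dist x xs)\<^sup>2 / (y1/2) - 1"
  have hL: "0 < w \<and> (dist x z < dist x xs \<longrightarrow> y1/2 \<le> w)" if "(z, w) \<in> ?L" for z w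
  proof -
    have "f z \<le> w" using that by (simp add: epi_mem)
    thus ?thesis using fge[of z] y1 by linarith
  qed
  have ph_low: "\<phi> y < 0" if "y \<le> yl" for y
  proof -
    have "y1/2 > 0" using y1 by simp
    from low_bound[OF this ys K clL epi_ne hL] that yl_def show ?thesis by (simp add: \<phi>_def)
  qed
  have ylt: "yl < y1/2"
  proof -
    have "0 \<le> (dist x xs)\<^sup>2 / (y1/2)" using y1 by simp
    thus ?thesis using ys y1 yl_def by linarith
  qed
  obtain ya where ya: "yl \<le> ya" "ya \<le> y1/2" "\<phi> ya = 0"
    using IVT'[of \<phi> yl 0 "y1/2", OF _ _ _ phic] ph_low[of yl] ph_mid ylt by auto
  have ya2: "ya < y1/2" using ya ph_mid by (cases "ya = y1/2") auto
  obtain yb where yb: "y1/2 \<le> yb" "yb \<le> yt" "\<phi> yb = 0"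
    using IVT2'[of \<phi> yt 0 "y1/2", OF _ _ _ phic] ph_top ph_mid yt1 y1 by auto
  have yb2: "y1/2 < yb" using yb ph_mid by (cases "yb = y1/2") auto
  define S where "S = {y. infdist (x, y) K = infdist (x, y) ?L}"
  have yaS: "ya \<in> S" using ya by (simp add: S_def \<phi>_def)
  have ybS: "yb \<in> S" using yb by (simp add: S_def \<phi>_def)
  have bb: "bdd_below S"
  proof (rule bdd_belowI)
    fix y assume "y \<in> S"
    hence "\<phi> y = 0" by (simp add: S_def \<phi>_def)
    show "yl \<le> y"
    proof (rule ccontr)
      assume "\<not> yl \<le> y"
      hence "\<phi> y < 0" using ph_low by simp
      thus False using \<open>\<phi> y = 0\<close> by simp
    qed
  qed
  have ba: "bdd_above S"
  proof (rule bdd_aboveI)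
    fix y assume yS: "y \<in> S"
    show "y \<le> f x"
    proof (rule ccontr)
      assume "\<not> y \<le> f x"
      hence inL: "(x, y) \<in> ?L" by (simp add: epi_mem)
      hence "infdist (x, y) K = 0" using yS by (simp add: S_def)
      hence "(x, y) \<in> K" using in_closed_iff_infdist_zero[OF cl ne] by simp
      thus False using inL disj by blast
    qed
  qed
  have "Inf S \<le> ya" by (rule cInf_lower[OF yaS bb])
  moreover have "yb \<le> Sup S" by (rule cSup_upper[OF ybS ba])
  ultimately have "Inf S < Sup S" using ya2 yb2 by linarith
  hence "equidist_lower K ?L x \<noteq> equidist_upper K ?L x"
    unfolding equidist_lower_def equidist_upper_def S_def by simp
  thus ?thesis using fpos fconv disj by blast
qed

theorem corollary8:
  fixes K :: "('a::euclidean_space \<times> real) set" and xs :: 'a and ys :: real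
  assumes "convex K" and "compact K" and "(xs, ys) \<in> K" and "ys \<le> 0"
  shows "((\<forall>f::'a \<Rightarrow> real. (\<forall>x. 0 < f x) \<and> continuous_on UNIV f \<and> K \<inter> epi_graph f = {}
             \<longrightarrow> (\<forall>x. equidist_lower K (epi_graph f) x = equidist_upper K (epi_graph f) x))
          \<longleftrightarrow>
          (\<forall>f::'a \<Rightarrow> real. (\<forall>x. 0 < f x) \<and> convex_on UNIV f \<and> K \<inter> epi_graph f = {}
             \<longrightarrow> (\<forall>x. equidist_lower K (epi_graph f) x = equidist_upper K (epi_graph f) x)))
       \<and>
         ((\<forall>f::'a \<Rightarrow> real. (\<forall>x. 0 < f x) \<and> convex_on UNIV f \<and> K \<inter> epi_graph f = {}
             \<longrightarrow> (\<forall>x. equidist_lower K (epi_graph f) x = equidist_upper K (epi_graph f) x))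
          \<longleftrightarrow>
          \<not> (\<exists>x0 y1 y2. 0 < y1 \<and> y1 < y2 \<and> (x0, y1) \<notin> K \<and> (x0, y2) \<in> K))"
proof -
  let ?A = "\<forall>f::'a \<Rightarrow> real. (\<forall>x. 0 < f x) \<and> continuous_on UNIV f \<and> K \<inter> epi_graph f = {}
             \<longrightarrow> (\<forall>x. equidist_lower K (epi_graph f) x = equidist_upper K (epi_graph f) x)"
  let ?B = "\<forall>f::'a \<Rightarrow> real. (\<forall>x. 0 < f x) \<and> convex_on UNIV f \<and> K \<inter> epi_graph f = {}
             \<longrightarrow> (\<forall>x. equidist_lower K (epi_graph f) x = equidist_upper K (epi_graph f) x)"
  let ?C = "\<not> (\<exists>x0 y1 y2. 0 < y1 \<and> y1 < y2 \<and> (x0, y1) \<notin> K \<and> (x0, y2) \<in> K)"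
  have AB: "?B" if a: "?A"
  proof (intro allI impI)
    fix f :: "'a \<Rightarrow> real" and x
    assume h: "(\<forall>x. 0 < f x) \<and> convex_on UNIV f \<and> K \<inter> epi_graph f = {}"
    have "continuous_on UNIV f" using h convex_on_continuous[OF open_UNIV] by blast
    thus "equidist_lower K (epi_graph f) x = equidist_upper K (epi_graph f) x" using a h by blast
  qed
  have BC: "?C" if b: "?B"
  proof
    assume "\<exists>x0 y1 y2. 0 < y1 \<and> y1 < y2 \<and> (x0, y1) \<notin> K \<and> (x0, y2) \<in> K"
    then obtain x0 y1 y2 where h: "0 < y1" "y1 < y2" "(x0, y1) \<notin> K" "(x0, y2) \<in> K" by blast
    from counter[OF assms(1,2,3,4) h] b show False by blast
  qed
  have CA: "?A" if c: "?C"
    using c_to_a[OF assms(2,3,4) c] by blast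
  show ?thesis using AB BC CA by blast
qed

end
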